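(* Let $\mathbb{F}$ be a finite field with $q$ elements, $q$ odd, and let $f\in\mathbb{F}[X]$ be a polynomial of degree $3$. If $q>9$, then there exists $x\in\mathbb{F}$ such that $f(x)\neq 0$ and $f(x)$ is not a square in $\mathbb{F}$. *)

theory Defs
  imports "HOL-Computational_Algebra.Polynomial" "HOL-Library.Cardinality"
begin

end

theory Submission
  imports Defs
begin

lemma ff_fermat:
  fixes x :: "'a :: {finite, field}"
  shows "x ^ CARD('a) = x"
proof (cases "x = 0")
  case True
  have "CARD('a) > 0" by simp
  then show ?thesis using True by (simp add: power_0_left)
next
  case False
  let ?S = "UNIV - {0::'a}"
  have bij: "bij_betw (\<lambda>y. x * y) ?S ?S"
    unfolding bij_betw_def inj_on_def
  proof (intro conjI)
    show "(\<lambda>y. x * y) ` ?S = ?S"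
    proof
      show "(\<lambda>y. x * y) ` ?S \<subseteq> ?S" using False by auto
      show "?S \<subseteq> (\<lambda>y. x * y) ` ?S"
      proof
        fix z assume z: "z \<in> ?S"
        have "z = x * (z / x)" using False by simp
        moreover have "z / x \<in> ?S" using z False by simp
        ultimately show "z \<in> (\<lambda>y. x * y) ` ?S" by blast
      qed
    qed
  qed (use False in auto)
  have "prod (\<lambda>y. x * y) ?S = prod (\<lambda>y. y) ?S"
    using prod.reindex_bij_betw[OF bij, of "\<lambda>y. y"] by simp
  moreover have "prod (\<lambda>y. x * y) ?S = x ^ card ?S * prod (\<lambda>y. y) ?S"
    by (simp add: prod.distrib)
  moreover have "prod (\<lambda>y. y) ?S \<noteq> 0" by (subst prod_zero_iff) auto
  ultimately have "x ^ card ?S = 1"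
    by (metis mult_cancel_right1)
  moreover have "card ?S = CARD('a) - 1" by (simp add: card_Diff_singleton)
  moreover have "CARD('a) > 0" by simp
  ultimately have "CARD('a) = Suc (card ?S)" by simp
  then have "x ^ CARD('a) = x * x ^ card ?S" by (metis power_Suc)
  then show ?thesis using \<open>x ^ card ?S = 1\<close> by simp
qed

lemma ff_char:
  shows "(of_nat CARD('a) :: 'a :: {finite, field}) = 0"
proof -
  have bij: "bij_betw (\<lambda>y::'a. y + 1) UNIV UNIV"
    by (rule bij_betw_byWitness[where f' = "\<lambda>y. y - 1"]) auto
  have "sum (\<lambda>y. y + 1) (UNIV::'a set) = sum (\<lambda>y. y) UNIV"
    using sum.reindex_bij_betw[OF bij, of "\<lambda>y. y"] by simp
  moreover have "sum (\<lambda>y. y + 1) (UNIV::'a set) = sum (\<lambda>y. y) UNIV + of_nat CARD('a)"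
    by (simp only: sum.distrib) simp
  ultimately show ?thesis by simp
qed

theorem mainTheorem11:
  fixes f :: "'a :: {finite, field} poly"
  assumes "odd CARD('a)"
    and "degree f = 3"
    and "CARD('a) > 9"
  shows "\<exists>x :: 'a. poly f x \<noteq> 0 \<and> \<not> (\<exists>y :: 'a. poly f x = y ^ 2)"
proof (rule ccontr)
  assume H: "\<not> ?thesis"
  define q where "q = CARD('a)"
  define m where "m = (q - 1) div 2"
  have q: "q = 2*m+1" using assms(1) unfolding q_def m_def by presburger
  have m5: "m \<ge> 5" using assms(3) q unfolding q_def by linarith
  have f0: "f \<noteq> 0" using assms(2) by auto
  have vals: "poly f x ^ (m+1) = poly f x" for x
  proof (cases "poly f x = 0")
    case True thus ?thesis by simp
  next
    case False
    then obtain y where y: "poly f x = y^2" using H by blast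
    have "(y^2)^(m+1) = y^q * y" by (simp add: q power_mult[symmetric] power_add[symmetric] algebra_simps)
    also have "\<dots> = y^2" using ff_fermat[of y] unfolding q_def by (simp add: power2_eq_square)
    finally show ?thesis using y by simp
  qed
  define Q where "Q = f^(m+1) - f"
  define W :: "'a poly" where "W = monom 1 q - [:0,1:]"
  have W0: "poly W x = 0" for x
    unfolding W_def by (simp add: poly_monom ff_fermat q_def)
  have degW: "degree W = q"
  proof -
    have "degree (monom (1::'a) q) = q" by (simp add: degree_monom_eq)
    moreover have "degree (- [:0,1::'a:]) = 1" by simp
    moreover have "q > 1" using q m5 by simp
    ultimately have "degree (monom 1 q + - [:0,1::'a:]) = q"
      using degree_add_eq_left[of "- [:0,1::'a:]" "monom 1 q"] by simp
    then show ?thesis unfolding W_def by (metis diff_conv_add_uminus)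
  qed
  have Wn0: "W \<noteq> 0" using degW q by auto
  have modz: "Q mod W = 0"
  proof (rule ccontr)
    assume R0: "Q mod W \<noteq> 0"
    have "poly (Q mod W) x = 0" for x
    proof -
      have "Q = W * (Q div W) + Q mod W" by simp
      then have "poly Q x = poly W x * poly (Q div W) x + poly (Q mod W) x"
        by (metis poly_add poly_mult)
      moreover have "poly Q x = 0" unfolding Q_def using vals[of x] by simp
      ultimately show ?thesis using W0 by simp
    qed
    then have "{x. poly (Q mod W) x = 0} = UNIV" by auto
    then have "q \<le> degree (Q mod W)" using card_poly_roots_bound[OF R0] unfolding q_def by simp
    moreover have "degree (Q mod W) < degree W" using degree_mod_less'[OF Wn0 R0] .
    ultimately show False using degW by simp
  qed
  define A where "A = Q div W"
  have QA: "Q = W * A" unfolding A_def using modz by (metis add.right_neutral div_mult_mod_eq mult.commute)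
  have dW: "pderiv W = -1"
  proof -
    have "pderiv (monom (1::'a) q) = 0" using ff_char[where 'a='a] by (simp add: pderiv_monom q_def)
    moreover have "pderiv [:0,1::'a:] = 1" by (simp add: pderiv_pCons)
    ultimately show ?thesis unfolding W_def by (simp add: pderiv_diff)
  qed
  have degfm: "degree (f^(m+1)) = 3*(m+1)" using degree_power_eq[OF f0, of "m+1"] assms(2) by (simp del: power_Suc)
  have degQ: "degree Q = 3*(m+1)"
  proof -
    have "degree (- f) < degree (f^(m+1))" using degfm assms(2) m5 by (simp del: power_Suc)
    then have "degree (f^(m+1) + - f) = 3*(m+1)" using degree_add_eq_left[of "- f" "f^(m+1)"] degfm by simp
    then show ?thesis unfolding Q_def by (metis diff_conv_add_uminus)
  qed
  have Q0: "Q \<noteq> 0" using degQ by auto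
  have A0: "A \<noteq> 0" using Q0 QA by auto
  have degA: "degree A = m + 2"
    using degree_mult_eq[OF Wn0 A0] QA degQ degW q by simp
  have d1: "pderiv Q = smult (of_nat (m+1)) (f^m * pderiv f) - pderiv f"
    unfolding Q_def pderiv_diff pderiv_power by simp
  have d2: "pderiv Q = - A + W * pderiv A"
    unfolding QA by (simp add: pderiv_mult dW)
  have e: "f * f^m = W * A + f" using QA unfolding Q_def by (simp add: algebra_simps)
  define c :: "'a poly" where "c = [:of_nat m:]"
  have sm: "smult (of_nat (m+1)) p = (c + 1) * p" for p
    unfolding c_def by (simp add: smult_add_left one_pCons)
  have hyp1: "(c+1)*(f^m * pderiv f) - pderiv f = - A + W * pderiv A" using d1 d2 sm by simp
  have ident: "f * (c * pderiv f + A) = W * (f * pderiv A - (c+1) * (pderiv f * A))"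
  proof -
    have "f * ((c+1)*(f^m * pderiv f) - pderiv f) = f * (- A + W * pderiv A)" using hyp1 by simp
    then have "(c+1)*((f * f^m) * pderiv f) - f * pderiv f = - (f * A) + f * W * pderiv A"
      by (simp add: algebra_simps)
    then have "(c+1)*((W * A + f) * pderiv f) - f * pderiv f = - (f * A) + f * W * pderiv A"
      using e by simp
    then show ?thesis by (simp add: algebra_simps)
  qed
  have degcf: "degree (c * pderiv f) < m + 2"
  proof -
    have "degree (c * pderiv f) \<le> degree c + degree (pderiv f)" by (rule degree_mult_le)
    also have "degree (pderiv f) \<le> 2"
      by (rule degree_le) (simp add: coeff_pderiv coeff_eq_0 assms(2))
    then have "degree c + degree (pderiv f) \<le> 2" unfolding c_def by simp
    finally show ?thesis using m5 by simp
  qed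
  have degS: "degree (c * pderiv f + A) = m + 2"
    using degree_add_eq_right[of "c * pderiv f" A] degcf degA by simp
  have S0: "c * pderiv f + A \<noteq> 0" using degS by auto
  have degL: "degree (f * (c * pderiv f + A)) = m + 5"
    using degree_mult_eq[OF f0 S0] degS assms(2) by simp
  define B where "B = f * pderiv A - (c+1) * (pderiv f * A)"
  have B0: "B \<noteq> 0" using ident degL unfolding B_def by auto
  have "degree (W * B) \<ge> q" using degree_mult_eq[OF Wn0 B0] degW by simp
  then show False using ident degL m5 q unfolding B_def by simp
qed

end
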